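(* Let $(\Sigma_P,\theta,\mu)$ be a Markov shift over a finite alphabet $S$, let $n\in\mathbb{N}$ and let $\varphi=\sum_{C\in C_n}k_C\mathbbm{1}_C$ with $k_C\in\mathbb{N}$. Let $\overline{M}$, $G$ and the cofactors $C_{t,r}$ be as defined in the context. Let $(a_1,\dots,a_m)$ be an admissible word with $m\ge n$, let $t$ be the index of the block $[a_1,\dots,a_n]\times[0,1)$ and $r$ the index of the block $[a_{m-n+1},\dots,a_m]\times[0,1)$. Then \[C_{t,r}(1)=\frac{1}{\mu(\varphi)}\,\mu([a_1,\dots,a_n])\,G(1).\]
   Context: A Markov shift: $P=(p_{a,b})_{a,b\in S}$ is a non-negative irreducible row-stochastic matrix, $\Sigma_P=\{x\in S^{\mathbb{N}}:p_{x_i,x_{i+1}}>0\ \forall i\}$, $\theta$ the shift, $\pi$ the unique positive probability vector with $\pi P=\pi$, and $\mu([a_1,\dots,a_n])=\pi_{a_1}\prod_{i=1}^{n-1}p_{a_i,a_{i+1}}$. $C_n$ is the set of (nonempty) $n$-cylinders; $\mu(\varphi)=\int\varphi\,d\mu$. The blocks are $\overline{C}_n=\{C\times[k-1,k):C\in C_n,1\le k\le k_C\}$, enumerated in a fixed order. $\overline{M}$ is the $\overline{C}_n\times\overline{C}_n$ matrix with: for $b=C\times[k-1,k)$ with $k<k_C$, $\overline{M}_{b,b'}=1$ if $b'=C\times[k,k+1)$ and $0$ otherwise; for $b=[a_1,\dots,a_n]\times[k_C-1,k_C)$ with $C=[a_1,\dots,a_n]$, $\overline{M}_{b,b'}=p_{a_n,a}$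 if $b'=[a_2,\dots,a_n,a]\times[0,1)$ for some $a\in S$ and $0$ otherwise. (This is the matrix of the transfer operator of the time-one map of the special flow under $\varphi$ on functions constant on blocks, w.r.t. the basis $\mathbbm{1}_b/\overline{\mu}(b)$.) $G$ is the polynomial with $\det(\mathrm{id}-z\overline{M})=(1-z)G(z)$, and $C_{t,r}(z)=(-1)^{t+r}\det[\mathrm{id}-z\overline{M}]_{t,r}$ is the cofactor (determinant of $\mathrm{id}-z\overline{M}$ with row $t$ and column $r$ removed). *)

theory Defs
  imports "Jordan_Normal_Form.Determinant" "HOL-Computational_Algebra.Polynomial"
begin

definition row_stochastic :: "('a::finite \<Rightarrow> 'a \<Rightarrow> real) \<Rightarrow> bool" where
  "row_stochastic P \<longleftrightarrow> (\<forall>a b. P a b \<ge> 0) \<and> (\<forall>a. (\<Sum>b\<in>UNIV. P a b) = 1)"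

definition irreducible_mc :: "('a \<Rightarrow> 'a \<Rightarrow> real) \<Rightarrow> bool" where
  "irreducible_mc P \<longleftrightarrow> (\<forall>a b. (a, b) \<in> {(x, y). P x y > 0}\<^sup>+)"

definition stationary_pos :: "('a::finite \<Rightarrow> 'a \<Rightarrow> real) \<Rightarrow> ('a \<Rightarrow> real) \<Rightarrow> bool" where
  "stationary_pos P \<pi> \<longleftrightarrow> (\<forall>a. \<pi> a > 0) \<and> (\<Sum>a\<in>UNIV. \<pi> a) = 1 \<and>
     (\<forall>b. (\<Sum>a\<in>UNIV. \<pi> a * P a b) = \<pi> b)"

definition admissible :: "('a \<Rightarrow> 'a \<Rightarrow> real) \<Rightarrow> 'a list \<Rightarrow> bool" where
  "admissible P w \<longleftrightarrow> successively (\<lambda>x y. P x y > 0) w"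

(* n-cylinders (nonempty), represented by their admissible words of length n *)
definition cyls :: "('a \<Rightarrow> 'a \<Rightarrow> real) \<Rightarrow> nat \<Rightarrow> 'a list set" where
  "cyls P n = {w. length w = n \<and> admissible P w}"

definition mu_cyl :: "('a \<Rightarrow> 'a \<Rightarrow> real) \<Rightarrow> ('a \<Rightarrow> real) \<Rightarrow> 'a list \<Rightarrow> real" where
  "mu_cyl P \<pi> w = \<pi> (hd w) * (\<Prod>i<length w - 1. P (w ! i) (w ! Suc i))"

(* mu(phi) for phi = sum_C k_C 1_C *)
definition mu_phi :: "('a \<Rightarrow> 'a \<Rightarrow> real) \<Rightarrow> ('a \<Rightarrow> real) \<Rightarrow> nat \<Rightarrow> ('a list \<Rightarrow> nat) \<Rightarrow> real" where
  "mu_phi P \<pi> n k = (\<Sum>C\<in>cyls P n. real (k C) * mu_cyl P \<pi> C)"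

(* blocks C \<times> [j-1, j) are represented by pairs (C, j) with 1 \<le> j \<le> k_C *)
definition blocks :: "('a \<Rightarrow> 'a \<Rightarrow> real) \<Rightarrow> nat \<Rightarrow> ('a list \<Rightarrow> nat) \<Rightarrow> ('a list \<times> nat) set" where
  "blocks P n k = {(C, j). C \<in> cyls P n \<and> 1 \<le> j \<and> j \<le> k C}"

definition Mbar_entry :: "('a \<Rightarrow> 'a \<Rightarrow> real) \<Rightarrow> ('a list \<Rightarrow> nat) \<Rightarrow> 'a list \<times> nat \<Rightarrow> 'a list \<times> nat \<Rightarrow> real" where
  "Mbar_entry P k b b' =
     (let (C, j) = b; (C', j') = b' in
      if j < k C then (if C' = C \<and> j' = Suc j then 1 else 0)
      else (if j' = 1 \<and> butlast C' = tl C then P (last C) (last C') else 0))"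

definition Mbar :: "('a \<Rightarrow> 'a \<Rightarrow> real) \<Rightarrow> ('a list \<Rightarrow> nat) \<Rightarrow> ('a list \<times> nat) list \<Rightarrow> real mat" where
  "Mbar P k bl = mat (length bl) (length bl) (\<lambda>(i, j). Mbar_entry P k (bl ! i) (bl ! j))"

(* position of a block in the enumeration (0-based) *)
definition blk_index :: "'b list \<Rightarrow> 'b \<Rightarrow> nat" where
  "blk_index bl b = (LEAST i. i < length bl \<and> bl ! i = b)"

definition IzM :: "real mat \<Rightarrow> real poly mat" where
  "IzM M = mat (dim_row M) (dim_col M)
     (\<lambda>(i, j). (if i = j then 1 else 0) - [:0, M $$ (i, j):])"

definition Gpoly :: "real mat \<Rightarrow> real poly" where
  "Gpoly M = det (IzM M) div [:1, -1:]"

definition cofactor_poly :: "real mat \<Rightarrow> nat \<Rightarrow> nat \<Rightarrow> real poly" where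
  "cofactor_poly M t r = (-1) ^ (t + r) * det (mat_delete (IzM M) t r)"

end

theory Submission
  imports Defs
begin


lemma det_rowsum:
  fixes B :: "'a::comm_ring_1 mat"
  assumes B: "B \<in> carrier_mat n n" and r: "r < n"
    and rs: "\<And>i. i < n \<Longrightarrow> (\<Sum>j<n. B $$ (i,j)) = c"
  shows "det B = c * (\<Sum>i<n. cofactor B i r)"
proof -
  have adj: "adj_mat B * B = det B \<cdot>\<^sub>m 1\<^sub>m n" using adj_mat[OF B] by simp
  have "det B = (\<Sum>j<n. (adj_mat B * B) $$ (r,j))"
    unfolding adj using r by (simp add: sum.delta' if_distrib cong: if_cong)
  also have "\<dots> = (\<Sum>j<n. \<Sum>i<n. cofactor B i r * B $$ (i,j))"
    using B r by (auto simp: times_mat_def scalar_prod_def adj_mat_def intro!: sum.cong)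
  also have "\<dots> = (\<Sum>i<n. cofactor B i r * (\<Sum>j<n. B $$ (i,j)))"
    by (subst sum.swap) (simp add: sum_distrib_left)
  also have "\<dots> = (\<Sum>i<n. cofactor B i r * c)" using rs by simp
  finally show ?thesis by (simp add: sum_distrib_left mult.commute)
qed

lemma cof_replace_col:
  fixes A :: "'a::comm_ring_1 mat"
  assumes A: "A \<in> carrier_mat n n" and r: "r < n"
  shows "det (replace_col A (vec n y) r) = (\<Sum>i<n. y i * cofactor A i r)"
proof -
  have D: "replace_col A (vec n y) r \<in> carrier_mat n n" using A by (auto simp: replace_col_def)
  show ?thesis
    by (subst laplace_expansion_column[OF D r], insert A r, auto intro!: sum.cong arg_cong[of _ _ det] 
      arg_cong[of _ _ "\<lambda> x. _ * x"] eq_matI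
      simp: replace_col_def cofactor_def mat_delete_def ac_simps)
qed

lemma cof_left_kernel:
  fixes A :: "'a::field mat"
  assumes A: "A \<in> carrier_mat n n" and r: "r < n"
    and lk: "\<And>j. j < n \<Longrightarrow> (\<Sum>i<n. \<nu> i * A $$ (i,j)) = 0"
    and nz: "i0 < n" "\<nu> i0 \<noteq> 0"
    and y: "(\<Sum>i<n. \<nu> i * y i) = 0"
  shows "(\<Sum>i<n. y i * cofactor A i r) = 0"
proof -
  let ?D = "replace_col A (vec n y) r"
  have D: "?D \<in> carrier_mat n n" using A by (auto simp: replace_col_def)
  have T: "transpose_mat ?D \<in> carrier_mat n n" using D by simp
  have "transpose_mat ?D *\<^sub>v vec n \<nu> = 0\<^sub>v n"
  proof (rule eq_vecI)
    fix j assume j: "j < dim_vec (0\<^sub>v n :: 'a vec)"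
    hence j: "j < n" by simp
    have "(transpose_mat ?D *\<^sub>v vec n \<nu>) $ j = (\<Sum>i<n. ?D $$ (i,j) * \<nu> i)"
      using D j by (auto simp: mult_mat_vec_def scalar_prod_def row_transpose atLeast0LessThan intro!: sum.cong)
    also have "\<dots> = 0"
    proof (cases "j = r")
      case True thus ?thesis using y A j by (auto simp: replace_col_def mult.commute)
    next
      case False thus ?thesis using lk[OF j] A j by (auto simp: replace_col_def mult.commute)
    qed
    finally show "(transpose_mat ?D *\<^sub>v vec n \<nu>) $ j = 0\<^sub>v n $ j" using j by simp
  qed (use D in auto)
  moreover have "vec n \<nu> \<noteq> 0\<^sub>v n" using nz by (metis index_vec index_zero_vec(1))
  ultimately have "det (transpose_mat ?D) = 0"
    using det_0_iff_vec_prod_zero_field[OF T] by (metis vec_carrier)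
  hence "det ?D = 0" using det_transpose[OF D] by simp
  thus ?thesis using cof_replace_col[OF A r] by simp
qed



definition pw :: "('a \<Rightarrow> 'a \<Rightarrow> real) \<Rightarrow> 'a list \<Rightarrow> real" where
  "pw P w = (\<Prod>i<length w - 1. P (w ! i) (w ! Suc i))"

lemma mu_cyl_pw: "mu_cyl P \<pi> w = \<pi> (hd w) * pw P w"
  by (simp add: mu_cyl_def pw_def)

lemma pw_single[simp]: "pw P [x] = 1" by (simp add: pw_def)

lemma pw_Cons2[simp]: "pw P (x # y # ys) = P x y * pw P (y # ys)"
  unfolding pw_def by (simp add: prod.lessThan_Suc_shift del: prod.lessThan_Suc)

lemma pw_snoc: "pw P (x # ys @ [c]) = pw P (x # ys) * P (last (x # ys)) c"
proof (induction ys arbitrary: x)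
  case Nil thus ?case by simp
next
  case (Cons y ys) thus ?case by simp
qed

lemma pw_nonneg: "(\<forall>a b. P a b \<ge> 0) \<Longrightarrow> pw P w \<ge> 0"
  unfolding pw_def by (auto intro: prod_nonneg)

lemma pw_pos: "admissible P w \<Longrightarrow> pw P w > 0"
proof (induction w rule: induct_list012)
  case 1 thus ?case by (simp add: pw_def)
next
  case (2 x) thus ?case by simp
next
  case (3 x y zs) thus ?case by (simp add: admissible_def)
qed

lemma entry_eq: "Mbar_entry P k (C,j) (C',j') = (if j < k C then (if C' = C \<and> j' = Suc j then 1 else 0)
   else (if j' = 1 \<and> butlast C' = tl C then P (last C) (last C') else 0))"
  by (simp add: Mbar_entry_def)

lemma finite_cyls: "finite (cyls (P::'a::finite \<Rightarrow> 'a \<Rightarrow> real) n)"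
proof -
  have "cyls P n \<subseteq> {xs. set xs \<subseteq> UNIV \<and> length xs = n}" by (auto simp: cyls_def)
  thus ?thesis by (rule finite_subset) (rule finite_lists_length_eq, simp)
qed

lemma blocks_Sigma: "blocks P n k = Sigma (cyls P n) (\<lambda>C. {1..k C})"
  by (auto simp: blocks_def)

lemma sum_blocks: "(\<Sum>b\<in>blocks (P::'a::finite \<Rightarrow> 'a \<Rightarrow> real) n k. f b) = (\<Sum>C\<in>cyls P n. \<Sum>j\<in>{1..k C}. f (C,j))"
  unfolding blocks_Sigma by (subst sum.Sigma) (auto simp: finite_cyls)

lemma cyls_butlast:
  assumes "n \<ge> 1" "length L = n - 1"
  shows "{C\<in>cyls P n. butlast C = L} = (\<lambda>a. L @ [a]) ` {a. admissible P (L @ [a])}"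
proof (intro equalityI subsetI)
  fix C assume "C \<in> {C\<in>cyls P n. butlast C = L}"
  hence C: "length C = n" "admissible P C" "butlast C = L" by (auto simp: cyls_def)
  hence "C \<noteq> []" using assms by auto
  hence "C = L @ [last C]" using C by (metis append_butlast_last_id)
  thus "C \<in> (\<lambda>a. L @ [a]) ` {a. admissible P (L @ [a])}" using C by (metis (mono_tags) image_eqI mem_Collect_eq)
qed (use assms in \<open>auto simp: cyls_def\<close>)

lemma cyls_tl:
  assumes "n \<ge> 1" "length L = n - 1"
  shows "{C\<in>cyls P n. tl C = L} = (\<lambda>a. a # L) ` {a. admissible P (a # L)}"
proof (intro equalityI subsetI)
  fix C assume "C \<in> {C\<in>cyls P n. tl C = L}"
  hence C: "length C = n" "admissible P C" "tl C = L" by (auto simp: cyls_def)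
  hence "C \<noteq> []" using assms by auto
  hence "C = hd C # L" using C by (metis list.collapse)
  thus "C \<in> (\<lambda>a. a # L) ` {a. admissible P (a # L)}" using C by (metis (mono_tags) image_eqI mem_Collect_eq)
qed (use assms in \<open>auto simp: cyls_def\<close>)

lemma row_sum_blocks:
  fixes P :: "'a::finite \<Rightarrow> 'a \<Rightarrow> real"
  assumes rs: "row_stochastic P" and n: "n \<ge> 1" and kpos: "\<forall>C\<in>cyls P n. k C \<ge> 1"
    and b: "(C,j) \<in> blocks P n k"
  shows "(\<Sum>b'\<in>blocks P n k. Mbar_entry P k (C,j) b') = 1"
proof -
  from b have C: "C \<in> cyls P n" "1 \<le> j" "j \<le> k C" by (auto simp: blocks_def)
  show ?thesis
  proof (cases "j < k C")
    case True
    have "(\<Sum>b'\<in>blocks P n k. Mbar_entry P k (C,j) b') = (\<Sum>b'\<in>blocks P n k. if b' = (C, Suc j) then 1 else 0)"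
      using True by (intro sum.cong) (auto simp: entry_eq split: if_splits)
    also have "\<dots> = 1" using True C
      by (subst sum.delta) (auto simp: blocks_Sigma finite_cyls)
    finally show ?thesis .
  next
    case False
    let ?L = "tl C"
    have lenL: "length ?L = n - 1" using C by (auto simp: cyls_def)
    have "(\<Sum>b'\<in>blocks P n k. Mbar_entry P k (C,j) b')
        = (\<Sum>C'\<in>cyls P n. \<Sum>j'\<in>{1..k C'}. if j' = 1 then (if butlast C' = ?L then P (last C) (last C') else 0) else 0)"
      unfolding sum_blocks using False by (intro sum.cong refl) (auto simp: entry_eq)
    also have "\<dots> = (\<Sum>C'\<in>cyls P n. if butlast C' = ?L then P (last C) (last C') else 0)"
      using kpos by (intro sum.cong refl) (simp add: kpos)
    also have "\<dots> = (\<Sum>C'\<in>{C'\<in>cyls P n. butlast C' = ?L}. P (last C) (last C'))"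
      by (simp add: sum.inter_filter finite_cyls)
    also have "\<dots> = (\<Sum>a\<in>{a. admissible P (?L @ [a])}. P (last C) a)"
      unfolding cyls_butlast[OF n lenL] by (subst sum.reindex) (auto simp: inj_on_def)
    also have "\<dots> = (\<Sum>a\<in>UNIV. P (last C) a)"
    proof (rule sum.mono_neutral_left)
      show "\<forall>a\<in>UNIV - {a. admissible P (?L @ [a])}. P (last C) a = 0"
      proof
        fix a assume a: "a \<in> UNIV - {a. admissible P (?L @ [a])}"
        have admC: "admissible P C" using C by (simp add: cyls_def)
        have Cne: "C \<noteq> []" using C n by (auto simp: cyls_def)
        have admL: "admissible P ?L"
        proof -
          obtain x xs where "C = x # xs" using Cne by (cases C) auto
          thus ?thesis using admC unfolding admissible_def by (auto simp: successively_Cons)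
        qed
        have Lne: "?L \<noteq> []" using a by (auto simp: admissible_def)
        have "\<not> P (last ?L) a > 0" using a admL Lne by (auto simp: admissible_def successively_append_iff)
        moreover have "last ?L = last C" using Lne Cne by (metis last_tl)
        moreover have "P (last C) a \<ge> 0" using rs by (simp add: row_stochastic_def)
        ultimately show "P (last C) a = 0" by auto
      qed
    qed auto
    also have "\<dots> = 1" using rs by (simp add: row_stochastic_def)
    finally show ?thesis .
  qed
qed

lemma stat_blocks:
  fixes P :: "'a::finite \<Rightarrow> 'a \<Rightarrow> real"
  assumes rs: "row_stochastic P" and st: "stationary_pos P \<pi>" and n: "n \<ge> 1" and kpos: "\<forall>C\<in>cyls P n. k C \<ge> 1"
    and b: "(C',j') \<in> blocks P n k"
  shows "(\<Sum>b\<in>blocks P n k. mu_cyl P \<pi> (fst b) * Mbar_entry P k b (C',j')) = mu_cyl P \<pi> C'"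
proof -
  from b have C': "C' \<in> cyls P n" "1 \<le> j'" "j' \<le> k C'" by (auto simp: blocks_def)
  show ?thesis
  proof (cases "j' = 1")
    case False
    have "(\<Sum>b\<in>blocks P n k. mu_cyl P \<pi> (fst b) * Mbar_entry P k b (C',j'))
       = (\<Sum>b\<in>blocks P n k. if b = (C', j' - 1) then mu_cyl P \<pi> C' else 0)"
      using False C' by (intro sum.cong refl) (auto simp: blocks_def entry_eq split: if_splits)
    also have "\<dots> = mu_cyl P \<pi> C'" using False C'
      by (subst sum.delta) (auto simp: blocks_Sigma finite_cyls)
    finally show ?thesis .
  next
    case True
    let ?L = "butlast C'"
    have lenL: "length ?L = n - 1" using C' by (auto simp: cyls_def)
    have C'ne: "C' \<noteq> []" using C' n by (auto simp: cyls_def)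
    have "(\<Sum>b\<in>blocks P n k. mu_cyl P \<pi> (fst b) * Mbar_entry P k b (C',j'))
        = (\<Sum>C\<in>cyls P n. \<Sum>j\<in>{1..k C}. if j = k C then (if tl C = ?L then mu_cyl P \<pi> C * P (last C) (last C') else 0) else 0)"
      unfolding sum_blocks using True by (intro sum.cong refl) (auto simp: entry_eq)
    also have "\<dots> = (\<Sum>C\<in>cyls P n. if tl C = ?L then mu_cyl P \<pi> C * P (last C) (last C') else 0)"
      using kpos by (intro sum.cong refl) (simp add: kpos)
    also have "\<dots> = (\<Sum>C\<in>{C\<in>cyls P n. tl C = ?L}. mu_cyl P \<pi> C * P (last C) (last C'))"
      by (simp add: sum.inter_filter finite_cyls)
    also have "\<dots> = (\<Sum>a\<in>{a. admissible P (a # ?L)}. mu_cyl P \<pi> (a # ?L) * P (last (a # ?L)) (last C'))"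
      unfolding cyls_tl[OF n lenL] by (subst sum.reindex) (auto simp: inj_on_def)
    also have "\<dots> = (\<Sum>a\<in>{a. admissible P (a # ?L)}. \<pi> a * P a (hd C') * pw P C')"
    proof (intro sum.cong refl)
      fix a
      have "mu_cyl P \<pi> (a # ?L) * P (last (a # ?L)) (last C') = \<pi> a * pw P (a # ?L @ [last C'])"
        by (simp add: mu_cyl_pw pw_snoc)
      also have "a # ?L @ [last C'] = a # C'" using C'ne by simp
      also have "pw P (a # C') = P a (hd C') * pw P C'" using C'ne by (metis list.collapse pw_Cons2)
      finally show "mu_cyl P \<pi> (a # ?L) * P (last (a # ?L)) (last C') = \<pi> a * P a (hd C') * pw P C'" by simp
    qed
    also have "\<dots> = (\<Sum>a\<in>UNIV. \<pi> a * P a (hd C') * pw P C')"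
    proof (rule sum.mono_neutral_left)
      show "\<forall>a\<in>UNIV - {a. admissible P (a # ?L)}. \<pi> a * P a (hd C') * pw P C' = 0"
      proof
        fix a assume a: "a \<in> UNIV - {a. admissible P (a # ?L)}"
        have admC: "admissible P C'" using C' by (simp add: cyls_def)
        have admL: "admissible P ?L"
        proof -
          have "C' = ?L @ [last C']" using C'ne by simp
          hence "successively (\<lambda>x y. P x y > 0) (?L @ [last C'])" using admC unfolding admissible_def by simp
          thus ?thesis unfolding admissible_def by (simp add: successively_append_iff)
        qed
        have Lne: "?L \<noteq> []" using a by (auto simp: admissible_def)
        have "\<not> P a (hd ?L) > 0"
        proof
          assume h: "P a (hd ?L) > 0"
          have "admissible P (a # hd ?L # tl ?L)" using admL Lne h unfolding admissible_def by (metis list.collapse successively_Cons)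
          thus False using a Lne by simp
        qed
        moreover have "hd ?L = hd C'" using Lne C'ne by (metis append_butlast_last_id hd_append2)
        moreover have "P a (hd C') \<ge> 0" using rs by (simp add: row_stochastic_def)
        ultimately have "P a (hd C') = 0" by auto
        thus "\<pi> a * P a (hd C') * pw P C' = 0" by simp
      qed
    qed auto
    also have "\<dots> = (\<Sum>a\<in>UNIV. \<pi> a * P a (hd C')) * pw P C'" by (simp add: sum_distrib_right)
    also have "\<dots> = mu_cyl P \<pi> C'" using st by (simp add: stationary_pos_def mu_cyl_pw)
    finally show ?thesis .
  qed
qed



lemma blk_index_ok: assumes "b \<in> set bl" shows "blk_index bl b < length bl" "bl ! blk_index bl b = b"
proof -
  obtain i where i: "i < length bl" "bl ! i = b" using assms by (metis in_set_conv_nth)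
  have "blk_index bl b < length bl \<and> bl ! blk_index bl b = b"
    unfolding blk_index_def by (rule LeastI[of _ i]) (use i in auto)
  thus "blk_index bl b < length bl" "bl ! blk_index bl b = b" by auto
qed

lemma adm_take: "admissible P w \<Longrightarrow> admissible P (take m w)"
  unfolding admissible_def by (metis append_take_drop_id successively_append_iff)
lemma adm_drop: "admissible P w \<Longrightarrow> admissible P (drop m w)"
  unfolding admissible_def by (metis append_take_drop_id successively_append_iff)

lemma sum_pCons0: "(\<Sum>j\<in>S. [:0, f j:]) = [:0, \<Sum>j\<in>S. f j:]"
  by (induction S rule: infinite_finite_induct) auto

lemma sum_idx: assumes "distinct xs" shows "(\<Sum>j<length xs. f (xs ! j)) = sum f (set xs)"
proof -
  have "(\<Sum>j<length xs. f (xs ! j)) = sum_list (map f xs)"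
    by (simp add: sum_list_sum_nth atLeast0LessThan)
  also have "\<dots> = sum f (set xs)" using assms by (simp add: sum_list_distinct_conv_sum_set)
  finally show ?thesis .
qed

theorem lemma7p3:
  fixes P :: "'a::finite \<Rightarrow> 'a \<Rightarrow> real"
    and \<pi> :: "'a \<Rightarrow> real"
    and n :: nat
    and k :: "'a list \<Rightarrow> nat"
    and bl :: "('a list \<times> nat) list"
    and w :: "'a list"
  assumes "row_stochastic P"
    and "irreducible_mc P"
    and "stationary_pos P \<pi>"
    and "n \<ge> 1"
    and "\<forall>C\<in>cyls P n. k C \<ge> 1"
    and "distinct bl" and "set bl = blocks P n k"
    and "admissible P w" and "length w \<ge> n"
  shows "poly (cofactor_poly (Mbar P k bl)
                 (blk_index bl (take n w, 1)) (blk_index bl (drop (length w - n) w, 1))) 1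
         = 1 / mu_phi P \<pi> n k * mu_cyl P \<pi> (take n w) * poly (Gpoly (Mbar P k bl)) 1"
proof -
  note rs = assms(1) and st = assms(3) and n = assms(4) and kpos = assms(5)
    and dist = assms(6) and setbl = assms(7) and admw = assms(8) and lw = assms(9)
  interpret ev1: comm_ring_hom "\<lambda>p::real poly. poly p 1" by unfold_locales auto
  define N where "N = length bl"
  define M where "M = Mbar P k bl"
  define B where "B = IzM M"
  define A where "A = map_mat (\<lambda>p. poly p 1) B"
  define t where "t = blk_index bl (take n w, 1)"
  define r where "r = blk_index bl (drop (length w - n) w, 1)"
  define \<nu> where "\<nu> = (\<lambda>i. mu_cyl P \<pi> (fst (bl ! i)))"
  have Mc: "M \<in> carrier_mat N N" by (simp add: M_def Mbar_def N_def)
  have Bc: "B \<in> carrier_mat N N" using Mc by (simp add: B_def IzM_def)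
  have Ac: "A \<in> carrier_mat N N" using Bc by (simp add: A_def)
  have Bij: "B $$ (i,j) = (if i = j then 1 else 0) - [:0, Mbar_entry P k (bl!i) (bl!j):]"
    if "i < N" "j < N" for i j using that by (simp add: B_def IzM_def M_def Mbar_def N_def)
  have Aij: "A $$ (i,j) = (if i = j then 1 else 0) - Mbar_entry P k (bl!i) (bl!j)"
    if "i < N" "j < N" for i j using that Bc by (simp add: A_def Bij)
  have sumidx: "(\<Sum>j<N. f (bl ! j)) = (\<Sum>b\<in>blocks P n k. f b)" for f :: "_ \<Rightarrow> real"
    using sum_idx[OF dist, of f] setbl by (simp add: N_def)
  have blk: "bl ! i \<in> blocks P n k" if "i < N" for i using that setbl by (metis N_def nth_mem)
  have rowM: "(\<Sum>j<N. Mbar_entry P k (bl!i) (bl!j)) = 1" if i: "i < N" for i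
  proof -
    obtain C j where Cj: "bl ! i = (C,j)" by (cases "bl ! i")
    show ?thesis using sumidx[of "Mbar_entry P k (bl!i)"] row_sum_blocks[OF rs n kpos, of C j] blk[OF i] Cj by simp
  qed
  have rowB: "(\<Sum>j<N. B $$ (i,j)) = [:1,-1:]" if i: "i < N" for i
  proof -
    have "(\<Sum>j<N. B $$ (i,j)) = (\<Sum>j<N. (if i = j then 1 else 0)) - (\<Sum>j<N. [:0, Mbar_entry P k (bl!i) (bl!j):])"
      using i by (simp add: Bij sum_subtractf)
    also have "\<dots> = 1 - [:0, 1:]" using i rowM[OF i] by (simp add: sum_pCons0)
    also have "(1::real poly) - [:0, 1:] = [:1,-1:]"
      by (rule poly_eqI) (auto simp: coeff_pCons coeff_1 split: nat.split)
    finally show ?thesis .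
  qed
  have tw: "take n w \<in> cyls P n" using lw admw adm_take by (auto simp: cyls_def)
  have dw: "drop (length w - n) w \<in> cyls P n" using lw admw adm_drop by (auto simp: cyls_def)
  have tb: "(take n w, 1) \<in> set bl" using tw kpos setbl by (auto simp: blocks_def)
  have db: "(drop (length w - n) w, 1) \<in> set bl" using dw kpos setbl by (auto simp: blocks_def)
  have t: "t < N" "bl ! t = (take n w, 1)" using blk_index_ok[OF tb] by (auto simp: t_def N_def)
  have r: "r < N" using blk_index_ok[OF db] by (auto simp: r_def N_def)
  define S where "S = (\<Sum>i<N. cofactor B i r)"
  have detB: "det B = [:1,-1:] * S" unfolding S_def by (rule det_rowsum[OF Bc r rowB])
  have G: "Gpoly M = S" unfolding Gpoly_def B_def[symmetric] detB
    by (rule nonzero_mult_div_cancel_left) simp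
  have cofA: "poly (cofactor B i r) 1 = cofactor A i r" for i
  proof -
    have "map_mat (\<lambda>p. poly p 1) (mat_delete B i r) = mat_delete A i r"
      unfolding A_def by (rule eq_matI) (auto simp: mat_delete_def)
    hence "poly (det (mat_delete B i r)) 1 = det (mat_delete A i r)" by (metis ev1.hom_det)
    thus ?thesis by (simp add: cofactor_def hom_distribs)
  qed
  have GS: "poly (Gpoly M) 1 = (\<Sum>i<N. cofactor A i r)"
    unfolding G S_def by (simp add: hom_distribs cofA)
  have CT: "poly (cofactor_poly M t r) 1 = cofactor A t r"
    using cofA[of t] by (simp add: cofactor_poly_def cofactor_def B_def)
  have nu_nonneg: "\<nu> i \<ge> 0" for i
    using st rs pw_nonneg[of P] by (simp add: \<nu>_def mu_cyl_pw stationary_pos_def row_stochastic_def less_imp_le)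
  have nut: "\<nu> t = mu_cyl P \<pi> (take n w)" using t by (simp add: \<nu>_def)
  have nut_pos: "\<nu> t > 0" using nut st pw_pos[OF adm_take[OF admw]]
    by (simp add: mu_cyl_pw stationary_pos_def)
  have sumnu: "(\<Sum>i<N. \<nu> i) = mu_phi P \<pi> n k"
    unfolding \<nu>_def sumidx[of "\<lambda>b. mu_cyl P \<pi> (fst b)"] sum_blocks mu_phi_def by simp
  have lk: "(\<Sum>i<N. \<nu> i * A $$ (i,j)) = 0" if j: "j < N" for j
  proof -
    have "(\<Sum>i<N. \<nu> i * A $$ (i,j)) = (\<Sum>i<N. if i = j then \<nu> i else 0) - (\<Sum>i<N. \<nu> i * Mbar_entry P k (bl!i) (bl!j))"
    proof -
      have "(\<Sum>i<N. \<nu> i * A $$ (i,j)) = (\<Sum>i<N. (if i = j then \<nu> i else 0) - \<nu> i * Mbar_entry P k (bl!i) (bl!j))"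
        using j by (intro sum.cong) (auto simp: Aij right_diff_distrib)
      thus ?thesis by (simp only: sum_subtractf)
    qed
    also have "(\<Sum>i<N. \<nu> i * Mbar_entry P k (bl!i) (bl!j)) = \<nu> j"
    proof -
      obtain C' j' where Cj: "bl ! j = (C',j')" by (cases "bl ! j")
      show ?thesis using sumidx[of "\<lambda>b. mu_cyl P \<pi> (fst b) * Mbar_entry P k b (bl!j)"]
          stat_blocks[OF rs st n kpos, of C' j'] blk[OF j] Cj by (simp add: \<nu>_def)
    qed
    finally show ?thesis using j by simp
  qed
  define y where "y = (\<lambda>i. \<nu> t - (if i = t then (\<Sum>i<N. \<nu> i) else 0))"
  have ysum: "(\<Sum>i<N. \<nu> i * y i) = 0"
  proof -
    have "(\<Sum>i<N. \<nu> i * y i) = (\<Sum>i<N. \<nu> i * \<nu> t - (if i = t then \<nu> t * (\<Sum>i<N. \<nu> i) else 0))"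
      by (intro sum.cong) (auto simp: y_def right_diff_distrib)
    also have "\<dots> = (\<Sum>i<N. \<nu> i) * \<nu> t - \<nu> t * (\<Sum>i<N. \<nu> i)"
      using t by (simp only: sum_subtractf sum_distrib_right) simp
    finally show ?thesis by simp
  qed
  have "(\<Sum>i<N. y i * cofactor A i r) = 0"
    by (rule cof_left_kernel[OF Ac r lk t(1) _ ysum]) (use nut_pos in auto)
  moreover have "(\<Sum>i<N. y i * cofactor A i r) = (\<Sum>i<N. \<nu> t * cofactor A i r - (if i = t then (\<Sum>i<N. \<nu> i) * cofactor A t r else 0))"
    by (intro sum.cong) (auto simp: y_def left_diff_distrib)
  moreover have "\<dots> = \<nu> t * (\<Sum>i<N. cofactor A i r) - (\<Sum>i<N. \<nu> i) * cofactor A t r"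
    using t by (simp only: sum_subtractf sum_distrib_left) simp
  ultimately have key: "\<nu> t * (\<Sum>i<N. cofactor A i r) = (\<Sum>i<N. \<nu> i) * cofactor A t r"
    by simp
  have pos: "(\<Sum>i<N. \<nu> i) > 0"
  proof -
    have "\<nu> t \<le> (\<Sum>i<N. \<nu> i)" using t nu_nonneg by (intro member_le_sum) auto
    thus ?thesis using nut_pos by linarith
  qed
  show ?thesis
    unfolding M_def[symmetric] t_def[symmetric] r_def[symmetric] CT GS
    using key pos by (simp add: sumnu[symmetric] nut[symmetric] field_simps)
qed

end
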